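(* Let $1\le r\le m\le n$, $k\ge1$, and let $P$ be a prime ideal of $S$ minimal over $\mathcal I^{m,n}_{r,k}$. Then for any two index pairs $(i,j)$ and $(i',j')$ with $1\le i,i'\le m$, $1\le j,j'\le n$, we have $x^{(0)}_{i,j}\in P$ if and only if $x^{(0)}_{i',j'}\in P$.
   Context: Let $F$ be an algebraically closed field. For integers $1\le r\le m\le n$ and $k\ge 1$, let $S=F[x^{(l)}_{i,j}:1\le i\le m,\ 1\le j\le n,\ 0\le l\le k-1]$, the coordinate ring of $\mathbf A^{mnk}_F$, and let $X(t)$ be the $m\times n$ matrix over $S[t]/(t^k)$ with $(i,j)$ entry $x_{i,j}(t)=\sum_{l=0}^{k-1}x^{(l)}_{i,j}t^l$. Every element of $S[t]/(t^k)$ is uniquely $\sum_{l=0}^{k-1}c_lt^l$ with $c_l\in S$ (its coefficient of $t^l$). $\mathcal I^{m,n}_{r,k}\subseteq S$ is the ideal generated by the coefficients of $t^l$, $0\le l\le k-1$, of all $r\times r$ minors of $X(t)$, and $\mathcal Z^{m,n}_{r,k}\subseteq\mathbf A^{mnk}_F$ is its zero set. *)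

theory Defs
  imports Main "HOL-Library.Poly_Mapping" "HOL-Computational_Algebra.Polynomial"
    "HOL-Combinatorics.Permutations"
begin

text \<open>Variables x^(l)_{i,j} are indexed by triples (i,j,l) with 1<=i<=m, 1<=j<=n, 0<=l<=k-1.
  Polynomials over the field 'a in variables of type nat*nat*nat are the poly_mapping
  type below; the ring S is the subset of those using only the mnk relevant variables.\<close>

type_synonym 'a mpoly3 = "((nat \<times> nat \<times> nat) \<Rightarrow>\<^sub>0 nat) \<Rightarrow>\<^sub>0 'a"

definition alg_closed :: "'a::field itself \<Rightarrow> bool" where
  "alg_closed _ \<longleftrightarrow> (\<forall>p::'a poly. degree p > 0 \<longrightarrow> (\<exists>x. poly p x = 0))"

definition S_ring :: "nat \<Rightarrow> nat \<Rightarrow> nat \<Rightarrow> 'a::field mpoly3 set" where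
  "S_ring m n k = {p. \<forall>\<mu>. \<mu> \<in> Poly_Mapping.keys (p :: 'a mpoly3) \<longrightarrow> Poly_Mapping.keys \<mu> \<subseteq> ({1..m} \<times> {1..n} \<times> {..<k})}"

definition Xvar :: "nat \<Rightarrow> nat \<Rightarrow> nat \<Rightarrow> 'a::field mpoly3" where
  "Xvar i j l = Poly_Mapping.single (Poly_Mapping.single (i, j, l) 1) 1"

definition xt :: "nat \<Rightarrow> nat \<Rightarrow> nat \<Rightarrow> 'a::field mpoly3 poly" where
  "xt k i j = (\<Sum>l<k. monom (Xvar i j l) l)"

text \<open>The r x r minor of X(t) with rows I 0 < ... < I (r-1), columns J 0 < ... < J (r-1),
  computed in S[t]; its coefficients of t^l for l<k coincide with those in S[t]/(t^k).\<close>
definition minor :: "nat \<Rightarrow> nat \<Rightarrow> (nat \<Rightarrow> nat) \<Rightarrow> (nat \<Rightarrow> nat) \<Rightarrow> 'a::field mpoly3 poly" where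
  "minor k r I J = (\<Sum>\<sigma> | \<sigma> permutes {..<r}. of_int (sign \<sigma>) * (\<Prod>a<r. xt k (I a) (J (\<sigma> a))))"

definition minor_coeffs :: "nat \<Rightarrow> nat \<Rightarrow> nat \<Rightarrow> nat \<Rightarrow> 'a::field mpoly3 set" where
  "minor_coeffs m n r k = {coeff (minor k r I J) l | I J l.
      l < k \<and> strict_mono_on {..<r} I \<and> strict_mono_on {..<r} J \<and>
      I ` {..<r} \<subseteq> {1..m} \<and> J ` {..<r} \<subseteq> {1..n}}"

definition ideal_in :: "'b::comm_ring_1 set \<Rightarrow> 'b set \<Rightarrow> bool" where
  "ideal_in R I \<longleftrightarrow> I \<subseteq> R \<and> 0 \<in> I \<and> (\<forall>a\<in>I. \<forall>b\<in>I. a + b \<in> I) \<and> (\<forall>a\<in>R. \<forall>b\<in>I. a * b \<in> I)"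

definition ideal_gen_in :: "'b::comm_ring_1 set \<Rightarrow> 'b set \<Rightarrow> 'b set" where
  "ideal_gen_in R G = \<Inter>{I. ideal_in R I \<and> G \<subseteq> I}"

definition prime_ideal_in :: "'b::comm_ring_1 set \<Rightarrow> 'b set \<Rightarrow> bool" where
  "prime_ideal_in R P \<longleftrightarrow> ideal_in R P \<and> P \<noteq> R \<and>
     (\<forall>a\<in>R. \<forall>b\<in>R. a * b \<in> P \<longrightarrow> a \<in> P \<or> b \<in> P)"

definition minimal_prime_over :: "'b::comm_ring_1 set \<Rightarrow> 'b set \<Rightarrow> 'b set \<Rightarrow> bool" where
  "minimal_prime_over R I P \<longleftrightarrow> prime_ideal_in R P \<and> I \<subseteq> P \<and>
     (\<forall>Q. prime_ideal_in R Q \<and> I \<subseteq> Q \<and> Q \<subseteq> P \<longrightarrow> Q = P)"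

definition Iideal :: "nat \<Rightarrow> nat \<Rightarrow> nat \<Rightarrow> nat \<Rightarrow> 'a::field mpoly3 set" where
  "Iideal m n r k = ideal_gen_in (S_ring m n k) (minor_coeffs m n r k)"

end

theory Submission imports Defs "Jordan_Normal_Form.Char_Poly" begin

abbreviation VV :: "nat \<Rightarrow> nat \<Rightarrow> nat \<Rightarrow> (nat \<times> nat \<times> nat) set" where
  "VV m n k \<equiv> {1..m} \<times> {1..n} \<times> {..<k}"

lemma S_iff: "p \<in> S_ring m n k \<longleftrightarrow> (\<forall>\<mu>\<in>Poly_Mapping.keys p. Poly_Mapping.keys \<mu> \<subseteq> VV m n k)"
  unfolding S_ring_def by auto

lemma S_add: "p \<in> S_ring m n k \<Longrightarrow> q \<in> S_ring m n k \<Longrightarrow> p + q \<in> S_ring m n k"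
  unfolding S_iff using keys_add[of p q] by blast

lemma S_uminus: "p \<in> S_ring m n k \<Longrightarrow> - p \<in> S_ring m n k"
  unfolding S_iff by simp

lemma S_diff: "p \<in> S_ring m n k \<Longrightarrow> q \<in> S_ring m n k \<Longrightarrow> p - q \<in> S_ring m n k"
  using S_add[of p m n k "-q"] S_uminus[of q] by simp

lemma S_mult: "p \<in> S_ring m n k \<Longrightarrow> q \<in> S_ring m n k \<Longrightarrow> p * q \<in> S_ring m n k"
proof -
  assume p: "p \<in> S_ring m n k" and q: "q \<in> S_ring m n k"
  show ?thesis unfolding S_iff
  proof
    fix \<mu> assume "\<mu> \<in> Poly_Mapping.keys (p * q)"
    hence "\<mu> \<in> {a + b | a b. a \<in> Poly_Mapping.keys p \<and> b \<in> Poly_Mapping.keys q}"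
      using keys_mult[of p q] by (rule subsetD[rotated])
    then obtain a b where ab: "\<mu> = a + b" "a \<in> Poly_Mapping.keys p" "b \<in> Poly_Mapping.keys q"
      by blast
    have "Poly_Mapping.keys \<mu> \<subseteq> Poly_Mapping.keys a \<union> Poly_Mapping.keys b"
      unfolding ab(1) by (rule keys_add)
    moreover have "Poly_Mapping.keys a \<subseteq> VV m n k" using p ab(2) unfolding S_iff by blast
    moreover have "Poly_Mapping.keys b \<subseteq> VV m n k" using q ab(3) unfolding S_iff by blast
    ultimately show "Poly_Mapping.keys \<mu> \<subseteq> VV m n k" by blast
  qed
qed

lemma S_single0: "Poly_Mapping.single 0 c \<in> S_ring m n k"
  unfolding S_iff by simp

lemma S_zero: "0 \<in> S_ring m n k" unfolding S_iff by simp
lemma S_one: "1 \<in> S_ring m n k" unfolding S_iff by simp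

lemma S_Xvar: "(a,b,l) \<in> VV m n k \<Longrightarrow> Xvar a b l \<in> S_ring m n k"
  unfolding S_iff Xvar_def by simp

lemma S_sum: "(\<And>x. x \<in> A \<Longrightarrow> f x \<in> S_ring m n k) \<Longrightarrow> sum f A \<in> S_ring m n k"
  by (induction A rule: infinite_finite_induct) (auto intro: S_zero S_add)

lemma S_prod: "(\<And>x. x \<in> A \<Longrightarrow> f x \<in> S_ring m n k) \<Longrightarrow> prod f A \<in> S_ring m n k"
  by (induction A rule: infinite_finite_induct) (auto intro: S_one S_mult)

lemma S_power: "p \<in> S_ring m n k \<Longrightarrow> p ^ N \<in> S_ring m n k"
  by (induction N) (auto intro: S_one S_mult)

lemma S_of_int: "of_int z \<in> S_ring m n k"
proof -
  have e: "(of_int z :: 'a::field mpoly3) = Poly_Mapping.single 0 (of_int z)"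
    by (rule single_of_int[symmetric])
  show ?thesis by (subst e) (rule S_single0)
qed

definition PS :: "nat \<Rightarrow> nat \<Rightarrow> nat \<Rightarrow> 'a::field mpoly3 poly set" where
  "PS m n k = {q. \<forall>a. coeff q a \<in> S_ring m n k}"

lemma PS_add: "p \<in> PS m n k \<Longrightarrow> q \<in> PS m n k \<Longrightarrow> p + q \<in> PS m n k"
  unfolding PS_def by (auto intro: S_add)
lemma PS_uminus: "p \<in> PS m n k \<Longrightarrow> - p \<in> PS m n k"
  unfolding PS_def by (auto intro: S_uminus)
lemma PS_mult: "p \<in> PS m n k \<Longrightarrow> q \<in> PS m n k \<Longrightarrow> p * q \<in> PS m n k"
  unfolding PS_def mem_Collect_eq coeff_mult
  by (intro allI S_sum S_mult) auto
lemma PS_zero: "0 \<in> PS m n k" unfolding PS_def by (auto intro: S_zero)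
lemma PS_one: "1 \<in> PS m n k" unfolding PS_def by (auto simp: coeff_1 intro: S_zero S_one)
lemma PS_const: "c \<in> S_ring m n k \<Longrightarrow> [:c:] \<in> PS m n k"
  unfolding PS_def by (auto simp: coeff_pCons split: nat.splits intro: S_zero)
lemma PS_pCons: "c \<in> S_ring m n k \<Longrightarrow> p \<in> PS m n k \<Longrightarrow> pCons c p \<in> PS m n k"
  unfolding PS_def by (auto simp: coeff_pCons split: nat.splits)
lemma PS_sum: "(\<And>x. x \<in> A \<Longrightarrow> f x \<in> PS m n k) \<Longrightarrow> sum f A \<in> PS m n k"
  by (induction A rule: infinite_finite_induct) (auto intro: PS_zero PS_add)
lemma PS_prod: "(\<And>x. x \<in> A \<Longrightarrow> f x \<in> PS m n k) \<Longrightarrow> prod f A \<in> PS m n k"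
  by (induction A rule: infinite_finite_induct) (auto intro: PS_one PS_mult)
lemma PS_power: "p \<in> PS m n k \<Longrightarrow> p ^ N \<in> PS m n k"
  by (induction N) (auto intro: PS_one PS_mult)
lemma PS_of_int: "of_int z \<in> PS m n k"
  by (simp add: of_int_poly PS_const S_of_int)
lemma PS_monom: "c \<in> S_ring m n k \<Longrightarrow> monom c l \<in> PS m n k"
  unfolding PS_def by (auto simp: coeff_monom intro: S_zero)


definition Cst :: "'a::field \<Rightarrow> 'a mpoly3 poly" where
  "Cst a = [:Poly_Mapping.single 0 a:]"

lemma Cst_add: "Cst (a + b) = Cst a + Cst b" by (simp add: Cst_def single_add)
lemma Cst_mult: "Cst (a * b) = Cst a * Cst b" by (simp add: Cst_def mult_single mult.commute)
lemma Cst_0[simp]: "Cst 0 = 0" by (simp add: Cst_def)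
lemma Cst_1[simp]: "Cst 1 = 1" by (simp add: Cst_def one_pCons)

definition mon :: "((nat \<times> nat \<times> nat) \<Rightarrow> 'a::field mpoly3 poly) \<Rightarrow> ((nat \<times> nat \<times> nat) \<Rightarrow>\<^sub>0 nat) \<Rightarrow> 'a mpoly3 poly" where
  "mon v \<mu> = (\<Prod>x\<in>Poly_Mapping.keys \<mu>. v x ^ Poly_Mapping.lookup \<mu> x)"

lemma mon_superset: "finite A \<Longrightarrow> Poly_Mapping.keys \<mu> \<subseteq> A \<Longrightarrow> mon v \<mu> = (\<Prod>x\<in>A. v x ^ Poly_Mapping.lookup \<mu> x)"
  unfolding mon_def by (rule prod.mono_neutral_left) (auto simp: in_keys_iff)

lemma mon_add: "mon v (\<mu> + \<nu>) = mon v \<mu> * mon v \<nu>"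
proof -
  let ?A = "Poly_Mapping.keys \<mu> \<union> Poly_Mapping.keys \<nu>"
  have "mon v (\<mu> + \<nu>) = (\<Prod>x\<in>?A. v x ^ Poly_Mapping.lookup (\<mu> + \<nu>) x)"
    by (rule mon_superset) (use keys_add[of \<mu> \<nu>] in auto)
  also have "\<dots> = (\<Prod>x\<in>?A. v x ^ Poly_Mapping.lookup \<mu> x * v x ^ Poly_Mapping.lookup \<nu> x)"
    by (simp add: lookup_add power_add)
  also have "\<dots> = (\<Prod>x\<in>?A. v x ^ Poly_Mapping.lookup \<mu> x) * (\<Prod>x\<in>?A. v x ^ Poly_Mapping.lookup \<nu> x)"
    by (rule prod.distrib)
  also have "\<dots> = mon v \<mu> * mon v \<nu>"
    by (subst (1 2) mon_superset[of ?A]) auto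
  finally show ?thesis .
qed

lemma mon_zero[simp]: "mon v 0 = 1" by (simp add: mon_def)

definition subst :: "((nat \<times> nat \<times> nat) \<Rightarrow> 'a::field mpoly3 poly) \<Rightarrow> 'a mpoly3 \<Rightarrow> 'a mpoly3 poly" where
  "subst v p = (\<Sum>\<mu>\<in>Poly_Mapping.keys p. Cst (Poly_Mapping.lookup p \<mu>) * mon v \<mu>)"

lemma subst_superset: "finite A \<Longrightarrow> Poly_Mapping.keys p \<subseteq> A \<Longrightarrow>
   subst v p = (\<Sum>\<mu>\<in>A. Cst (Poly_Mapping.lookup p \<mu>) * mon v \<mu>)"
  unfolding subst_def by (rule sum.mono_neutral_left) (auto simp: in_keys_iff)

lemma subst_add: "subst v (p + q) = subst v p + subst v q"
proof -
  let ?A = "Poly_Mapping.keys p \<union> Poly_Mapping.keys q"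
  have "subst v (p + q) = (\<Sum>\<mu>\<in>?A. Cst (Poly_Mapping.lookup (p + q) \<mu>) * mon v \<mu>)"
    by (rule subst_superset) (use keys_add[of p q] in auto)
  also have "\<dots> = (\<Sum>\<mu>\<in>?A. Cst (Poly_Mapping.lookup p \<mu>) * mon v \<mu> + Cst (Poly_Mapping.lookup q \<mu>) * mon v \<mu>)"
    by (simp add: lookup_add Cst_add distrib_right)
  also have "\<dots> = subst v p + subst v q"
    by (subst sum.distrib, subst (1 2) subst_superset[of ?A]) auto
  finally show ?thesis .
qed

lemma subst_zero[simp]: "subst v 0 = 0" by (simp add: subst_def)

lemma subst_sum: "subst v (sum f A) = (\<Sum>x\<in>A. subst v (f x))"
  by (induction A rule: infinite_finite_induct) (auto simp: subst_add)

lemma subst_single: "subst v (Poly_Mapping.single \<mu> a) = Cst a * mon v \<mu>"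
  by (cases "a = 0") (auto simp: subst_def)

lemma pm_decomp: "p = (\<Sum>\<mu>\<in>Poly_Mapping.keys p. Poly_Mapping.single \<mu> (Poly_Mapping.lookup p \<mu>))"
  by (rule poly_mapping_eqI) (auto simp: lookup_sum lookup_single when_def in_keys_iff)

lemma subst_mult: "subst v (p * q) = subst v p * subst v q"
proof -
  let ?P = "Poly_Mapping.keys p" and ?Q = "Poly_Mapping.keys q"
  have "p * q = (\<Sum>\<mu>\<in>?P. Poly_Mapping.single \<mu> (Poly_Mapping.lookup p \<mu>)) * (\<Sum>\<nu>\<in>?Q. Poly_Mapping.single \<nu> (Poly_Mapping.lookup q \<nu>))"
    using pm_decomp[of p] pm_decomp[of q] by simp
  also have "\<dots> = (\<Sum>\<mu>\<in>?P. \<Sum>\<nu>\<in>?Q. Poly_Mapping.single (\<mu> + \<nu>) (Poly_Mapping.lookup p \<mu> * Poly_Mapping.lookup q \<nu>))"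
    by (simp add: sum_product mult_single)
  finally have "subst v (p * q) = (\<Sum>\<mu>\<in>?P. \<Sum>\<nu>\<in>?Q. Cst (Poly_Mapping.lookup p \<mu> * Poly_Mapping.lookup q \<nu>) * mon v (\<mu> + \<nu>))"
    by (simp add: subst_sum subst_single)
  also have "\<dots> = (\<Sum>\<mu>\<in>?P. \<Sum>\<nu>\<in>?Q. (Cst (Poly_Mapping.lookup p \<mu>) * mon v \<mu>) * (Cst (Poly_Mapping.lookup q \<nu>) * mon v \<nu>))"
    by (simp add: Cst_mult mon_add mult_ac)
  also have "\<dots> = subst v p * subst v q"
    by (simp add: subst_def sum_product)
  finally show ?thesis .
qed

lemma subst_one: "subst v 1 = 1"
  using subst_single[of v 0 1] by simp

lemma subst_hom: "comm_ring_hom (subst v)"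
  by unfold_locales (simp_all add: subst_add subst_mult subst_one)


definition XV :: "nat \<times> nat \<times> nat \<Rightarrow> 'a::field mpoly3" where
  "XV x = Poly_Mapping.single (Poly_Mapping.single x 1) 1"

lemma Xvar_XV: "Xvar a b l = XV (a,b,l)" by (simp add: Xvar_def XV_def)

lemma subst_XV: "subst v (XV x) = v x"
  unfolding XV_def subst_single by (simp add: mon_def)

lemma XV_power: "XV x ^ e = Poly_Mapping.single (Poly_Mapping.single x e) 1"
proof (induction e)
  case 0 show ?case by simp
next
  case (Suc e)
  show ?case by (simp only: power_Suc Suc) (simp add: XV_def mult_single single_add[symmetric])
qed

lemma prod_single1: "(\<Prod>x\<in>A. Poly_Mapping.single (f x) (1::'a::field)) = Poly_Mapping.single (\<Sum>x\<in>A. f x) 1"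
  by (induction A rule: infinite_finite_induct) (auto simp: mult_single)

lemma mon_XV: "(\<Prod>x\<in>Poly_Mapping.keys \<mu>. (XV x :: 'a::field mpoly3) ^ Poly_Mapping.lookup \<mu> x) = Poly_Mapping.single \<mu> 1"
  by (simp add: XV_power prod_single1 pm_decomp[of \<mu>, symmetric])

definition vf :: "(nat \<times> nat \<times> nat \<Rightarrow> 'a::field mpoly3) \<Rightarrow> nat \<times> nat \<times> nat \<Rightarrow> 'a mpoly3 poly" where
  "vf w x = [:XV x, w x:]"

lemma subst_coeff0: "coeff (subst (vf w) p) 0 = p"
proof -
  have "coeff (subst (vf w) p) 0 = poly (subst (vf w) p) 0" by (simp add: poly_0_coeff_0)
  also have "\<dots> = (\<Sum>\<mu>\<in>Poly_Mapping.keys p. Poly_Mapping.single 0 (Poly_Mapping.lookup p \<mu>) *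
      (\<Prod>x\<in>Poly_Mapping.keys \<mu>. XV x ^ Poly_Mapping.lookup \<mu> x))"
    by (simp add: subst_def mon_def poly_sum poly_prod poly_power Cst_def vf_def)
  also have "\<dots> = (\<Sum>\<mu>\<in>Poly_Mapping.keys p. Poly_Mapping.single \<mu> (Poly_Mapping.lookup p \<mu>))"
    by (simp add: mon_XV mult_single)
  also have "\<dots> = p" by (rule pm_decomp[symmetric])
  finally show ?thesis .
qed

lemma subst_PS:
  assumes p: "p \<in> S_ring m n k" and w: "\<And>x. x \<in> VV m n k \<Longrightarrow> w x \<in> S_ring m n k"
  shows "subst (vf w) p \<in> PS m n k"
  unfolding subst_def mon_def
proof (intro PS_sum PS_mult PS_prod PS_power)
  fix \<mu> assume "\<mu> \<in> Poly_Mapping.keys p"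
  thus "Cst (Poly_Mapping.lookup p \<mu>) \<in> PS m n k" by (simp add: Cst_def PS_const S_single0)
  fix x assume "x \<in> Poly_Mapping.keys \<mu>"
  with \<open>\<mu> \<in> _\<close> p have x: "x \<in> VV m n k" unfolding S_iff by blast
  obtain a b c where xe: "x = (a,b,c)" by (cases x)
  have "XV x \<in> S_ring m n k" using x S_Xvar[of a b c m n k] xe
    by (simp add: Xvar_XV)
  thus "vf w x \<in> PS m n k" unfolding vf_def
    by (intro PS_pCons PS_const w x)
qed

lemma map_mat_mat': "map_mat f (mat r c g) = mat r c (\<lambda>ij. f (g ij))"
  by (rule eq_matI) auto

lemma det_row_lin:
  fixes f g :: "nat \<Rightarrow> 'b::comm_ring_1"
  assumes p: "p < r"
  shows "det (mat r r (\<lambda>(a,b). if a = p then f b + c * g b else E a b)) =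
    det (mat r r (\<lambda>(a,b). if a = p then f b else E a b)) + c * det (mat r r (\<lambda>(a,b). if a = p then g b else E a b))"
proof -
  let ?A1 = "mat r r (\<lambda>(a,b). if a = p then f b + c * g b else E a b)"
  let ?A2 = "mat r r (\<lambda>(a,b). if a = p then f b else E a b)"
  let ?A3 = "mat r r (\<lambda>(a,b). if a = p then g b else E a b)"
  have key: "(\<Prod>a=0..<r. ?A1 $$ (a, \<sigma> a)) = (\<Prod>a=0..<r. ?A2 $$ (a, \<sigma> a)) + c * (\<Prod>a=0..<r. ?A3 $$ (a, \<sigma> a))"
    if s: "\<sigma> permutes {0..<r}" for \<sigma>
  proof -
    have sl: "\<And>a. a < r \<Longrightarrow> \<sigma> a < r" using s by (simp add: permutes_in_image)
    have pr: "\<And>A. (\<Prod>a=0..<r. A $$ (a, \<sigma> a)) = A $$ (p, \<sigma> p) * (\<Prod>a\<in>{0..<r}-{p}. A $$ (a, \<sigma> a))"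
      using p by (subst prod.remove[of _ p]) auto
    have rest: "(\<Prod>a\<in>{0..<r}-{p}. ?A1 $$ (a, \<sigma> a)) = (\<Prod>a\<in>{0..<r}-{p}. E a (\<sigma> a))"
       "(\<Prod>a\<in>{0..<r}-{p}. ?A2 $$ (a, \<sigma> a)) = (\<Prod>a\<in>{0..<r}-{p}. E a (\<sigma> a))"
       "(\<Prod>a\<in>{0..<r}-{p}. ?A3 $$ (a, \<sigma> a)) = (\<Prod>a\<in>{0..<r}-{p}. E a (\<sigma> a))"
      by (auto intro!: prod.cong simp: sl)
    show ?thesis unfolding pr[of ?A1] pr[of ?A2] pr[of ?A3] rest using p sl[OF p] by (simp add: algebra_simps)
  qed
  have "det ?A1 = (\<Sum>\<sigma>\<in>{\<sigma>. \<sigma> permutes {0..<r}}. signof \<sigma> * (\<Prod>a=0..<r. ?A1 $$ (a, \<sigma> a)))"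
    by (rule det_def'[of _ r]) simp
  also have "\<dots> = (\<Sum>\<sigma>\<in>{\<sigma>. \<sigma> permutes {0..<r}}. signof \<sigma> * (\<Prod>a=0..<r. ?A2 $$ (a, \<sigma> a))
      + c * (signof \<sigma> * (\<Prod>a=0..<r. ?A3 $$ (a, \<sigma> a))))"
    by (rule sum.cong[OF refl]) (simp only: mem_Collect_eq key algebra_simps)
  also have "\<dots> = (\<Sum>\<sigma>\<in>{\<sigma>. \<sigma> permutes {0..<r}}. signof \<sigma> * (\<Prod>a=0..<r. ?A2 $$ (a, \<sigma> a)))
      + c * (\<Sum>\<sigma>\<in>{\<sigma>. \<sigma> permutes {0..<r}}. signof \<sigma> * (\<Prod>a=0..<r. ?A3 $$ (a, \<sigma> a)))"
    by (simp only: sum.distrib sum_distrib_left)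
  also have "\<dots> = det ?A2 + c * det ?A3"
    by (simp only: det_def'[of ?A2 r] det_def'[of ?A3 r] mat_carrier)
  finally show ?thesis .
qed


lemma const_crh: "comm_ring_hom (\<lambda>q::'a::comm_ring_1. [:q:])"
  by unfold_locales (auto simp: one_pCons)

lemma map_poly_crh: "comm_ring_hom h \<Longrightarrow> comm_ring_hom (map_poly h)"
proof -
  assume h: "comm_ring_hom h"
  interpret m: map_poly_comm_ring_hom h using h by (simp add: map_poly_comm_ring_hom_def)
  show ?thesis by (rule m.comm_ring_hom_axioms)
qed

abbreviation Lf :: "'a::field mpoly3 poly \<Rightarrow> 'a mpoly3 poly poly" where
  "Lf \<equiv> map_poly (\<lambda>q. [:q:])"

definition Cc :: "'a::field mpoly3 poly poly" where "Cc = [:[:0,1:]:]"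

lemma Lf_det: "Lf (det A) = det (map_mat Lf A)"
  using comm_ring_hom.hom_det[OF map_poly_crh[OF const_crh]] by metis

lemma sm_update:
  assumes sm: "strict_mono_on {..<r} R" and p: "p < r" "R p = i"
    and adj: "i' = Suc i \<or> i = Suc i'" and nin: "i' \<notin> R ` {..<r}"
  shows "strict_mono_on {..<r} (R(p := i'))"
proof (rule strict_mono_onI)
  fix a b assume ab: "a \<in> {..<r}" "b \<in> {..<r}" "a < b"
  have Ra: "R a \<noteq> i'" and Rb: "R b \<noteq> i'" using nin ab by auto
  consider "a = p" | "b = p" | "a \<noteq> p" "b \<noteq> p" by blast
  thus "(R(p := i')) a < (R(p := i')) b"
  proof cases
    case 1
    hence "R p < R b" using strict_mono_onD[OF sm] ab by blast
    with 1 ab Rb p adj show ?thesis by auto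
  next
    case 2
    hence "R a < R p" using strict_mono_onD[OF sm] ab by blast
    with 2 ab Ra p adj show ?thesis by auto
  next
    case 3
    thus ?thesis using strict_mono_onD[OF sm] ab by auto
  qed
qed

lemma rowop:
  fixes F :: "nat \<Rightarrow> nat \<Rightarrow> 'a::field mpoly3 poly" and R :: "nat \<Rightarrow> nat"
  assumes hom: "comm_ring_hom \<Psi>"
    and entry: "\<And>u b. \<Psi> (F u b) = Lf (F u b) + (if u = i then Cc * Lf (F i' b) else 0)"
    and sm: "strict_mono_on {..<r} R"
    and adj: "i' = Suc i \<or> i = Suc i'"
  shows "\<exists>M2. \<Psi> (det (mat r r (\<lambda>(a,b). F (R a) b))) = Lf (det (mat r r (\<lambda>(a,b). F (R a) b))) + Cc * Lf M2 \<and>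
     (M2 = 0 \<or> (\<exists>R'. strict_mono_on {..<r} R' \<and> R' ` {..<r} \<subseteq> R ` {..<r} \<union> {i'} \<and>
        M2 = det (mat r r (\<lambda>(a,b). F (R' a) b))))"
proof -
  have hd: "\<Psi> (det A) = det (map_mat \<Psi> A)" for A
    using comm_ring_hom.hom_det[OF hom] by metis
  have L1: "Lf (det (mat r r (\<lambda>(a,b). F (R a) b))) = det (mat r r (\<lambda>(a,b). Lf (F (R a) b)))" for R
    by (simp add: Lf_det map_mat_mat' case_prod_unfold)
  have E: "\<Psi> (det (mat r r (\<lambda>(a,b). F (R a) b))) =
     det (mat r r (\<lambda>(a,b). Lf (F (R a) b) + (if R a = i then Cc * Lf (F i' b) else 0)))"
    by (simp add: hd map_mat_mat' case_prod_unfold entry)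
  show ?thesis
  proof (cases "\<exists>p<r. R p = i")
    case False
    hence "\<Psi> (det (mat r r (\<lambda>(a,b). F (R a) b))) = Lf (det (mat r r (\<lambda>(a,b). F (R a) b)))"
      unfolding E L1 by (intro arg_cong[where f = det] cong_mat) auto
    thus ?thesis by (intro exI[of _ 0]) simp
  next
    case True
    then obtain p where p: "p < r" "R p = i" by blast
    have uniq: "a < r \<Longrightarrow> R a = i \<longleftrightarrow> a = p" for a
      using strict_mono_on_imp_inj_on[OF sm] p unfolding inj_on_def by auto
    define R' where "R' = R(p := i')"
    let ?M2 = "det (mat r r (\<lambda>(a,b). F (R' a) b))"
    have "\<Psi> (det (mat r r (\<lambda>(a,b). F (R a) b))) =
       det (mat r r (\<lambda>(a,b). if a = p then Lf (F i b) + Cc * Lf (F i' b) else Lf (F (R a) b)))"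
      unfolding E by (intro arg_cong[where f = det] cong_mat) (auto simp: uniq p)
    also have "\<dots> = det (mat r r (\<lambda>(a,b). if a = p then Lf (F i b) else Lf (F (R a) b)))
        + Cc * det (mat r r (\<lambda>(a,b). if a = p then Lf (F i' b) else Lf (F (R a) b)))"
      by (rule det_row_lin[OF p(1)])
    also have "det (mat r r (\<lambda>(a,b). if a = p then Lf (F i b) else Lf (F (R a) b))) =
        Lf (det (mat r r (\<lambda>(a,b). F (R a) b)))"
      unfolding L1 by (intro arg_cong[where f = det] cong_mat) (auto simp: p)
    also have "det (mat r r (\<lambda>(a,b). if a = p then Lf (F i' b) else Lf (F (R a) b))) = Lf ?M2"
      unfolding L1 R'_def by (intro arg_cong[where f = det] cong_mat) auto
    finally have eq: "\<Psi> (det (mat r r (\<lambda>(a,b). F (R a) b))) = Lf (det (mat r r (\<lambda>(a,b). F (R a) b))) + Cc * Lf ?M2" .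
    show ?thesis
    proof (cases "i' \<in> R ` {..<r}")
      case True
      then obtain q where q: "q < r" "R q = i'" by auto
      have qp: "q \<noteq> p" using q p adj by auto
      have "?M2 = 0"
        by (rule det_identical_rows[of _ r q p]) (use q p qp in \<open>auto simp: R'_def\<close>)
      thus ?thesis using eq by (intro exI[of _ ?M2]) simp
    next
      case False
      have "strict_mono_on {..<r} R'" unfolding R'_def by (rule sm_update[OF sm p adj False])
      moreover have "R' ` {..<r} \<subseteq> R ` {..<r} \<union> {i'}" unfolding R'_def by auto
      ultimately show ?thesis using eq by (intro exI[of _ ?M2]) blast
    qed
  qed
qed


lemma coeff_xt: "coeff (xt k a b) l = (if l < k then Xvar a b l else 0)"
  by (simp add: xt_def coeff_sum coeff_monom)

definition wR :: "nat \<Rightarrow> nat \<Rightarrow> nat \<times> nat \<times> nat \<Rightarrow> 'a::field mpoly3" where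
  "wR i i' x = (case x of (a,b,l) \<Rightarrow> if a = i then Xvar i' b l else 0)"

definition wC :: "nat \<Rightarrow> nat \<Rightarrow> nat \<times> nat \<times> nat \<Rightarrow> 'a::field mpoly3" where
  "wC j j' x = (case x of (a,b,l) \<Rightarrow> if b = j then Xvar a j' l else 0)"

lemma coeff_Cc: "coeff (Cc * p) l = [:0,1:] * coeff p l"
  by (simp add: Cc_def)

lemma subst_Xvar: "subst (vf w) (Xvar a b l) = [:Xvar a b l, w (a,b,l):]"
  by (simp add: Xvar_XV subst_XV vf_def)

lemma entry_row: "map_poly (subst (vf (wR i i'))) (xt k a b) =
   Lf (xt k a b) + (if a = i then Cc * Lf (xt k i' b) else 0)"
  by (rule poly_eqI) (auto simp: coeff_map_poly coeff_Cc coeff_xt subst_Xvar wR_def)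

lemma entry_col: "map_poly (subst (vf (wC j j'))) (xt k a b) =
   Lf (xt k a b) + (if b = j then Cc * Lf (xt k a j') else 0)"
  by (rule poly_eqI) (auto simp: coeff_map_poly coeff_Cc coeff_xt subst_Xvar wC_def)

lemma minor_det: "minor k r I J = det (mat r r (\<lambda>(a,b). xt k (I a) (J b)))"
  unfolding minor_def det_def by (simp add: atLeast0LessThan)

lemma minor_det_T: "minor k r I J = det (mat r r (\<lambda>(a,b). xt k (I b) (J a)))"
proof -
  have T: "transpose_mat (mat r r (\<lambda>(a,b). xt k (I a) (J b))) = mat r r (\<lambda>(a,b). xt k (I b) (J a))"
    by (rule eq_matI) auto
  have "minor k r I J = det (transpose_mat (mat r r (\<lambda>(a,b). xt k (I a) (J b))))"
    unfolding minor_det by (rule det_transpose[symmetric, of _ r]) simp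
  also have "\<dots> = det (mat r r (\<lambda>(a,b). xt k (I b) (J a)))" by (subst T) (rule refl)
  finally show ?thesis .
qed

lemma coeff_LC: "coeff (coeff (Lf D + Cc * Lf M) l) a = (if a = 0 then coeff D l else if a = 1 then coeff M l else 0)"
  by (auto simp: coeff_Cc coeff_pCons coeff_map_poly split: nat.splits)

lemma subst_hom_mp: "comm_ring_hom (map_poly (subst v))"
  by (rule map_poly_crh[OF subst_hom])

lemma row_closed:
  assumes adj: "i' = Suc i \<or> i = Suc i'" and i': "i' \<in> {1..m}"
    and g: "(g :: 'a::field mpoly3) \<in> minor_coeffs m n r k"
  shows "coeff (subst (vf (wR i i')) g) a \<in> minor_coeffs m n r k \<union> {0}"
proof -
  from g obtain I J l where g: "g = coeff (minor k r I J) l" and l: "l < k"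
    and smI: "strict_mono_on {..<r} I" and smJ: "strict_mono_on {..<r} J"
    and rI: "I ` {..<r} \<subseteq> {1..m}" and rJ: "J ` {..<r} \<subseteq> {1..n}"
    unfolding minor_coeffs_def by blast
  let ?\<Phi> = "subst (vf (wR i i'))"
  obtain M2 :: "'a mpoly3 poly" where M2: "map_poly ?\<Phi> (det (mat r r (\<lambda>(a,b). xt k (I a) (J b)))) =
      Lf (det (mat r r (\<lambda>(a,b). xt k (I a) (J b)))) + Cc * Lf M2"
    and M2c: "M2 = 0 \<or> (\<exists>R'. strict_mono_on {..<r} R' \<and> R' ` {..<r} \<subseteq> I ` {..<r} \<union> {i'} \<and>
        M2 = det (mat r r (\<lambda>(a,b). xt k (R' a) (J b))))"
    apply (insert rowop[where F = "\<lambda>u b. xt k u (J b)" and i = i and i' = i' and R = I and \<Psi> = "map_poly ?\<Phi>", OF subst_hom_mp entry_row smI adj])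
    by (elim exE conjE, rule that, assumption+)
  have e1: "subst (vf (wR i i')) g = coeff (map_poly ?\<Phi> (minor k r I J)) l"
    unfolding g by (simp add: coeff_map_poly)
  have e2: "map_poly ?\<Phi> (minor k r I J) = Lf (minor k r I J) + Cc * Lf M2"
    using M2 by (simp only: minor_det)
  have "coeff (subst (vf (wR i i')) g) a = coeff (coeff (Lf (minor k r I J) + Cc * Lf M2) l) a"
    unfolding e1 e2 ..
  also have "\<dots> = (if a = 0 then coeff (minor k r I J) l else if a = 1 then coeff M2 l else 0)"
    by (rule coeff_LC)
  finally have e: "coeff (subst (vf (wR i i')) g) a = (if a = 0 then coeff (minor k r I J) l else if a = 1 then coeff M2 l else 0)" .
  have m1: "coeff (minor k r I J) l \<in> minor_coeffs m n r k"
    unfolding minor_coeffs_def using l smI smJ rI rJ by blast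
  have m2: "coeff M2 l \<in> minor_coeffs m n r k \<union> {0}"
    using M2c
  proof
    assume "\<exists>R'. strict_mono_on {..<r} R' \<and> R' ` {..<r} \<subseteq> I ` {..<r} \<union> {i'} \<and>
        M2 = det (mat r r (\<lambda>(a,b). xt k (R' a) (J b)))"
    then obtain R' where R': "strict_mono_on {..<r} R'" "R' ` {..<r} \<subseteq> I ` {..<r} \<union> {i'}"
        "M2 = minor k r R' J" unfolding minor_det by blast
    have "R' ` {..<r} \<subseteq> {1..m}" using R'(2) rI i' by blast
    thus ?thesis unfolding minor_coeffs_def using R' l smJ rJ by blast
  qed simp
  show ?thesis using e m1 m2 by auto
qed

lemma col_closed:
  assumes adj: "j' = Suc j \<or> j = Suc j'" and j': "j' \<in> {1..n}"
    and g: "(g :: 'a::field mpoly3) \<in> minor_coeffs m n r k"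
  shows "coeff (subst (vf (wC j j')) g) a \<in> minor_coeffs m n r k \<union> {0}"
proof -
  from g obtain I J l where g: "g = coeff (minor k r I J) l" and l: "l < k"
    and smI: "strict_mono_on {..<r} I" and smJ: "strict_mono_on {..<r} J"
    and rI: "I ` {..<r} \<subseteq> {1..m}" and rJ: "J ` {..<r} \<subseteq> {1..n}"
    unfolding minor_coeffs_def by blast
  let ?\<Phi> = "subst (vf (wC j j'))"
  obtain M2 :: "'a mpoly3 poly" where M2: "map_poly ?\<Phi> (det (mat r r (\<lambda>(a,b). xt k (I b) (J a)))) =
      Lf (det (mat r r (\<lambda>(a,b). xt k (I b) (J a)))) + Cc * Lf M2"
    and M2c: "M2 = 0 \<or> (\<exists>R'. strict_mono_on {..<r} R' \<and> R' ` {..<r} \<subseteq> J ` {..<r} \<union> {j'} \<and>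
        M2 = det (mat r r (\<lambda>(a,b). xt k (I b) (R' a))))"
    apply (insert rowop[where F = "\<lambda>u b. xt k (I b) u" and i = j and i' = j' and R = J and \<Psi> = "map_poly ?\<Phi>", OF subst_hom_mp entry_col smJ adj])
    by (elim exE conjE, rule that, assumption+)
  have e1: "subst (vf (wC j j')) g = coeff (map_poly ?\<Phi> (minor k r I J)) l"
    unfolding g by (simp add: coeff_map_poly)
  have e2: "map_poly ?\<Phi> (minor k r I J) = Lf (minor k r I J) + Cc * Lf M2"
    using M2 by (simp only: minor_det_T)
  have "coeff (subst (vf (wC j j')) g) a = coeff (coeff (Lf (minor k r I J) + Cc * Lf M2) l) a"
    unfolding e1 e2 ..
  also have "\<dots> = (if a = 0 then coeff (minor k r I J) l else if a = 1 then coeff M2 l else 0)"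
    by (rule coeff_LC)
  finally have e: "coeff (subst (vf (wC j j')) g) a = (if a = 0 then coeff (minor k r I J) l else if a = 1 then coeff M2 l else 0)" .
  have m1: "coeff (minor k r I J) l \<in> minor_coeffs m n r k"
    unfolding minor_coeffs_def using l smI smJ rI rJ by blast
  have m2: "coeff M2 l \<in> minor_coeffs m n r k \<union> {0}"
    using M2c
  proof
    assume "\<exists>R'. strict_mono_on {..<r} R' \<and> R' ` {..<r} \<subseteq> J ` {..<r} \<union> {j'} \<and>
        M2 = det (mat r r (\<lambda>(a,b). xt k (I b) (R' a)))"
    then obtain R' where R': "strict_mono_on {..<r} R'" "R' ` {..<r} \<subseteq> J ` {..<r} \<union> {j'}"
        "M2 = minor k r I R'" unfolding minor_det_T by blast
    have "R' ` {..<r} \<subseteq> {1..n}" using R'(2) rJ j' by blast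
    thus ?thesis unfolding minor_coeffs_def using R' l smI rI by blast
  qed simp
  show ?thesis using e m1 m2 by auto
qed


locale subr =
  fixes R :: "'b::comm_ring_1 set"
  assumes z: "0 \<in> R" and o: "1 \<in> R" and ad: "\<And>a b. a \<in> R \<Longrightarrow> b \<in> R \<Longrightarrow> a + b \<in> R"
    and mu: "\<And>a b. a \<in> R \<Longrightarrow> b \<in> R \<Longrightarrow> a * b \<in> R" and ne: "\<And>a. a \<in> R \<Longrightarrow> - a \<in> R"
begin

lemma pw: "a \<in> R \<Longrightarrow> a ^ N \<in> R"
  by (induction N) (auto intro: o mu)

lemma ideal_neg: "ideal_in R Q \<Longrightarrow> a \<in> Q \<Longrightarrow> - a \<in> Q"
  unfolding ideal_in_def using ne[OF o] by (metis mult_minus1)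

lemma ideal_diff: "ideal_in R Q \<Longrightarrow> a \<in> Q \<Longrightarrow> b \<in> Q \<Longrightarrow> a - b \<in> Q"
  using ideal_neg[of Q b] unfolding ideal_in_def by (metis diff_conv_add_uminus)

lemma ideal_sum: "ideal_in R Q \<Longrightarrow> (\<And>x. x \<in> A \<Longrightarrow> f x \<in> Q) \<Longrightarrow> sum f A \<in> Q"
  by (induction A rule: infinite_finite_induct) (auto simp: ideal_in_def)

lemma ideal_multR: "ideal_in R Q \<Longrightarrow> a \<in> Q \<Longrightarrow> b \<in> R \<Longrightarrow> a * b \<in> Q"
  unfolding ideal_in_def by (metis mult.commute)

lemma one_notin: "prime_ideal_in R P \<Longrightarrow> 1 \<notin> P"
proof
  assume P: "prime_ideal_in R P" and one: "1 \<in> P"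
  have "R \<subseteq> P"
  proof
    fix u assume "u \<in> R"
    hence "u * 1 \<in> P" using P one unfolding prime_ideal_in_def ideal_in_def by blast
    thus "u \<in> P" by simp
  qed
  moreover have "P \<subseteq> R" "P \<noteq> R" using P unfolding prime_ideal_in_def ideal_in_def by auto
  ultimately show False by blast
qed

lemma prime_pow: "prime_ideal_in R P \<Longrightarrow> a \<in> R \<Longrightarrow> a ^ N \<in> P \<Longrightarrow> a \<in> P"
proof (induction N)
  case 0
  thus ?case using one_notin[OF 0(1)] by simp
next
  case (Suc N)
  have "a * a ^ N \<in> P" using Suc(4) by simp
  moreover have "a ^ N \<in> R" using pw[OF Suc(3)] .
  ultimately have "a \<in> P \<or> a ^ N \<in> P" using Suc(2,3) unfolding prime_ideal_in_def by blast
  thus ?case using Suc(1)[OF Suc(2,3)] by blast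
qed

lemma ideal_Inter: "ideal_in R P \<Longrightarrow> G \<subseteq> P \<Longrightarrow> ideal_in R (ideal_gen_in R G)"
proof -
  assume P: "ideal_in R P" and GP: "G \<subseteq> P"
  let ?F = "{J. ideal_in R J \<and> G \<subseteq> J}"
  have PF: "P \<in> ?F" using P GP by blast
  show ?thesis unfolding ideal_gen_in_def ideal_in_def[of R "\<Inter>?F"]
  proof (intro conjI ballI)
    show "\<Inter>?F \<subseteq> R" using PF P unfolding ideal_in_def by blast
    show "0 \<in> \<Inter>?F" unfolding ideal_in_def by blast
    fix u v assume u: "u \<in> \<Inter>?F" and v: "v \<in> \<Inter>?F"
    show "u + v \<in> \<Inter>?F"
    proof
      fix J assume J: "J \<in> ?F"
      hence "u \<in> J" "v \<in> J" using u v by blast+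
      thus "u + v \<in> J" using J unfolding ideal_in_def by blast
    qed
  next
    fix u v assume u: "u \<in> R" and v: "v \<in> \<Inter>?F"
    show "u * v \<in> \<Inter>?F"
    proof
      fix J assume J: "J \<in> ?F"
      hence "v \<in> J" using v by blast
      thus "u * v \<in> J" using J u unfolding ideal_in_def by blast
    qed
  qed
qed

lemma min_prime_witness:
  assumes I: "ideal_in R I" and mp: "minimal_prime_over R I P" and x: "x \<in> P"
  shows "\<exists>y\<in>R. y \<notin> P \<and> (\<exists>N. y * x ^ N \<in> I)"
proof (rule ccontr)
  assume no: "\<not> ?thesis"
  have Pp: "prime_ideal_in R P" and IP: "I \<subseteq> P"
    and Pmin: "\<And>Q. prime_ideal_in R Q \<Longrightarrow> I \<subseteq> Q \<Longrightarrow> Q \<subseteq> P \<Longrightarrow> Q = P"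
    using mp unfolding minimal_prime_over_def by auto
  have PR: "P \<subseteq> R" using Pp unfolding prime_ideal_in_def ideal_in_def by blast
  have xR: "x \<in> R" using x PR by blast
  have one: "1 \<notin> P" using one_notin[OF Pp] .
  define T where "T = {y * x ^ N | y N. y \<in> R \<and> y \<notin> P}"
  have TI: "T \<inter> I = {}" using no unfolding T_def by blast
  have RPT: "y \<in> R \<Longrightarrow> y \<notin> P \<Longrightarrow> y \<in> T" for y unfolding T_def by (rule CollectI, rule exI[of _ y], rule exI[of _ 0]) simp
  have xT: "x \<in> T" unfolding T_def using o one by (intro CollectI exI[of _ 1] exI[of _ 1]) simp
  have TT: "t1 \<in> T \<Longrightarrow> t2 \<in> T \<Longrightarrow> t1 * t2 \<in> T" for t1 t2
  proof -
    assume "t1 \<in> T" "t2 \<in> T"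
    then obtain y1 N1 y2 N2 where t: "t1 = y1 * x ^ N1" "t2 = y2 * x ^ N2" "y1 \<in> R" "y1 \<notin> P" "y2 \<in> R" "y2 \<notin> P"
      unfolding T_def by blast
    have "y1 * y2 \<notin> P" using Pp t unfolding prime_ideal_in_def by blast
    moreover have "t1 * t2 = (y1 * y2) * x ^ (N1 + N2)" unfolding t by (simp add: power_add mult_ac)
    ultimately show ?thesis unfolding T_def using t mu by blast
  qed
  define F where "F = {Q. ideal_in R Q \<and> I \<subseteq> Q \<and> Q \<inter> T = {}}"
  have IF: "I \<in> F" unfolding F_def using I TI by blast
  have "\<exists>M\<in>F. \<forall>X\<in>F. M \<subseteq> X \<longrightarrow> X = M"
  proof (rule Zorn_Lemma2, rule ballI)
    fix C assume C: "C \<in> chains F"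
    show "\<exists>U\<in>F. \<forall>X\<in>C. X \<subseteq> U"
    proof (cases "C = {}")
      case True thus ?thesis using IF by blast
    next
      case False
      have CF: "C \<subseteq> F" and ch: "\<And>A B. A \<in> C \<Longrightarrow> B \<in> C \<Longrightarrow> A \<subseteq> B \<or> B \<subseteq> A"
        using C unfolding chains_def chain_subset_def by auto
      have "ideal_in R (\<Union>C)" unfolding ideal_in_def
      proof (intro conjI ballI)
        show "\<Union>C \<subseteq> R" using CF unfolding F_def ideal_in_def by blast
        show "0 \<in> \<Union>C" using CF False unfolding F_def ideal_in_def by blast
        fix a b assume a: "a \<in> \<Union>C" and b: "b \<in> \<Union>C"
        then obtain A B where AB: "A \<in> C" "B \<in> C" "a \<in> A" "b \<in> B" by blast
        show "a + b \<in> \<Union>C"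
        proof (cases "A \<subseteq> B")
          case True
          thus ?thesis using AB CF unfolding F_def ideal_in_def by blast
        next
          case False
          hence "B \<subseteq> A" using ch AB by blast
          thus ?thesis using AB CF unfolding F_def ideal_in_def by blast
        qed
      next
        fix a b assume a: "a \<in> R" and b: "b \<in> \<Union>C"
        then obtain B where "B \<in> C" "b \<in> B" by blast
        thus "a * b \<in> \<Union>C" using a CF unfolding F_def ideal_in_def by blast
      qed
      moreover have "I \<subseteq> \<Union>C" using CF False unfolding F_def by blast
      moreover have "\<Union>C \<inter> T = {}" using CF unfolding F_def by blast
      ultimately show ?thesis unfolding F_def by blast
    qed
  qed
  then obtain Q where QF: "Q \<in> F" and Qmax: "\<And>X. X \<in> F \<Longrightarrow> Q \<subseteq> X \<Longrightarrow> X = Q" by blast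
  have Qi: "ideal_in R Q" and IQ: "I \<subseteq> Q" and QT: "Q \<inter> T = {}" using QF unfolding F_def by auto
  have QR: "Q \<subseteq> R" using Qi unfolding ideal_in_def by blast
  have QP: "Q \<subseteq> P"
  proof
    fix q assume "q \<in> Q"
    with QR QT RPT show "q \<in> P" by blast
  qed
  have ext: "\<exists>q s. q \<in> Q \<and> s \<in> R \<and> q + s * a \<in> T" if a: "a \<in> R" "a \<notin> Q" for a
  proof (rule ccontr)
    assume nex: "\<not> ?thesis"
    define Qa where "Qa = {q + s * a | q s. q \<in> Q \<and> s \<in> R}"
    have "ideal_in R Qa" unfolding ideal_in_def
    proof (intro conjI ballI)
      show "Qa \<subseteq> R" unfolding Qa_def using QR a mu ad by blast
      show "0 \<in> Qa" unfolding Qa_def using Qi z unfolding ideal_in_def by force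
      fix u v assume "u \<in> Qa" "v \<in> Qa"
      then obtain q1 s1 q2 s2 where uv: "u = q1 + s1 * a" "v = q2 + s2 * a" "q1 \<in> Q" "q2 \<in> Q" "s1 \<in> R" "s2 \<in> R"
        unfolding Qa_def by blast
      have "u + v = (q1 + q2) + (s1 + s2) * a" unfolding uv by (simp add: algebra_simps)
      moreover have "q1 + q2 \<in> Q" using Qi uv unfolding ideal_in_def by blast
      ultimately show "u + v \<in> Qa" unfolding Qa_def using uv ad by blast
    next
      fix u v assume u: "u \<in> R" and "v \<in> Qa"
      then obtain q s where v: "v = q + s * a" "q \<in> Q" "s \<in> R" unfolding Qa_def by blast
      have "u * v = u * q + (u * s) * a" unfolding v by (simp add: algebra_simps)
      moreover have "u * q \<in> Q" using Qi u v unfolding ideal_in_def by blast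
      ultimately show "u * v \<in> Qa" unfolding Qa_def using u v mu by blast
    qed
    moreover have "Q \<subseteq> Qa"
    proof
      fix q assume "q \<in> Q" thus "q \<in> Qa" unfolding Qa_def using z by force
    qed
    moreover have "a \<in> Qa" unfolding Qa_def using Qi o unfolding ideal_in_def by force
    moreover have "Qa \<inter> T = {}" using nex unfolding Qa_def by blast
    ultimately have "Qa \<in> F" "Q \<subseteq> Qa" "Qa \<noteq> Q" using IQ a unfolding F_def by blast+
    thus False using Qmax by blast
  qed
  have "prime_ideal_in R Q" unfolding prime_ideal_in_def
  proof (intro conjI ballI impI)
    show "ideal_in R Q" by fact
    show "Q \<noteq> R" using o one QP by blast
    fix a b assume a: "a \<in> R" and b: "b \<in> R" and ab: "a * b \<in> Q"
    show "a \<in> Q \<or> b \<in> Q"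
    proof (rule ccontr)
      assume "\<not> (a \<in> Q \<or> b \<in> Q)"
      hence na: "a \<notin> Q" and nb: "b \<notin> Q" by auto
      obtain q1 s1 where t1: "q1 \<in> Q" "s1 \<in> R" "q1 + s1 * a \<in> T" using ext[OF a na] by blast
      obtain q2 s2 where t2: "q2 \<in> Q" "s2 \<in> R" "q2 + s2 * b \<in> T" using ext[OF b nb] by blast
      have Qadd: "\<And>u v. u \<in> Q \<Longrightarrow> v \<in> Q \<Longrightarrow> u + v \<in> Q" and Qmul: "\<And>u v. u \<in> R \<Longrightarrow> v \<in> Q \<Longrightarrow> u * v \<in> Q"
        using Qi unfolding ideal_in_def by auto
      have e: "(q1 + s1 * a) * (q2 + s2 * b) = q1 * (q2 + s2 * b) + ((s1 * a) * q2 + (s1 * s2) * (a * b))"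
        by (simp add: algebra_simps)
      have "q2 + s2 * b \<in> R" using QR t2 mu[OF t2(2) b] ad by blast
      hence 1: "q1 * (q2 + s2 * b) \<in> Q" by (rule ideal_multR[OF Qi t1(1)])
      have 2: "(s1 * a) * q2 \<in> Q" by (rule Qmul[OF mu[OF t1(2) a] t2(1)])
      have 3: "(s1 * s2) * (a * b) \<in> Q" by (rule Qmul[OF mu[OF t1(2) t2(2)] ab])
      have "(q1 + s1 * a) * (q2 + s2 * b) \<in> Q" unfolding e by (intro Qadd 1 2 3)
      moreover have "(q1 + s1 * a) * (q2 + s2 * b) \<in> T" using TT t1(3) t2(3) by blast
      ultimately show False using QT by blast
    qed
  qed
  hence "Q = P" using Pmin IQ QP by blast
  thus False using x xT QT by blast
qed

end


lemma S_subr: "subr (S_ring m n k)"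
  by unfold_locales (auto intro: S_zero S_one S_add S_mult S_uminus)

lemma xt_PS: "a \<in> {1..m} \<Longrightarrow> b \<in> {1..n} \<Longrightarrow> xt k a b \<in> PS m n k"
  unfolding xt_def by (intro PS_sum PS_monom S_Xvar) auto

lemma minor_PS:
  assumes "I ` {..<r} \<subseteq> {1..m}" "J ` {..<r} \<subseteq> {1..n}"
  shows "minor k r I J \<in> PS m n k"
  unfolding minor_def
proof (intro PS_sum PS_mult PS_of_int PS_prod)
  fix \<sigma> a assume s: "\<sigma> \<in> {\<sigma>. \<sigma> permutes {..<r}}" and a: "a \<in> {..<r}"
  have "\<sigma> a \<in> {..<r}" using s a permutes_in_image[of \<sigma> "{..<r}" a] by simp
  thus "xt k (I a) (J (\<sigma> a)) \<in> PS m n k" using assms a by (intro xt_PS) auto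
qed

lemma minor_coeffs_S: "minor_coeffs m n r k \<subseteq> S_ring m n k"
proof
  fix g :: "'a::field mpoly3" assume "g \<in> minor_coeffs m n r k"
  then obtain I J l where g: "g = coeff (minor k r I J) l"
    and rI: "I ` {..<r} \<subseteq> {1..m}" and rJ: "J ` {..<r} \<subseteq> {1..n}"
    unfolding minor_coeffs_def by blast
  show "g \<in> S_ring m n k" using minor_PS[OF rI rJ, of k] unfolding g PS_def by blast
qed

lemma coeff_mult_monomN: "coeff (p * monom c n) n = c * coeff p 0"
  by (simp add: mult.commute[of p] coeff_monom_mult)

lemma K_closed:
  fixes w :: "nat \<times> nat \<times> nat \<Rightarrow> 'a::field mpoly3"
  assumes wS: "\<And>x. x \<in> VV m n k \<Longrightarrow> w x \<in> S_ring m n k"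
    and cl: "\<And>g a. g \<in> minor_coeffs m n r k \<Longrightarrow> coeff (subst (vf w) g) a \<in> minor_coeffs m n r k \<union> {0}"
    and P: "ideal_in (S_ring m n k) (P :: 'a mpoly3 set)" and GP: "minor_coeffs m n r k \<subseteq> P"
    and g: "g \<in> Iideal m n r k"
  shows "coeff (subst (vf w) g) a \<in> P"
proof -
  interpret subr "S_ring m n k" by (rule S_subr)
  define K where "K = {g \<in> S_ring m n k. \<forall>a. coeff (subst (vf w) g) a \<in> P}"
  have P0: "0 \<in> P" and Padd: "\<And>u v. u \<in> P \<Longrightarrow> v \<in> P \<Longrightarrow> u + v \<in> P"
    and Pmul: "\<And>u v. u \<in> S_ring m n k \<Longrightarrow> v \<in> P \<Longrightarrow> u * v \<in> P"
    using P unfolding ideal_in_def by auto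
  have KI: "ideal_in (S_ring m n k) K" unfolding ideal_in_def[of _ K]
  proof (intro conjI ballI)
    show "K \<subseteq> S_ring m n k" unfolding K_def by blast
    show "0 \<in> K" unfolding K_def using S_zero P0 by simp
    fix u v :: "'a mpoly3" assume u: "u \<in> K" and v: "v \<in> K"
    have "u + v \<in> S_ring m n k" using u v S_add[of u m n k v] unfolding K_def by blast
    moreover have "coeff (subst (vf w) (u + v)) a \<in> P" for a
    proof -
      have "coeff (subst (vf w) u) a \<in> P" "coeff (subst (vf w) v) a \<in> P" using u v unfolding K_def by blast+
      hence "coeff (subst (vf w) u) a + coeff (subst (vf w) v) a \<in> P" by (rule Padd)
      thus ?thesis by (simp add: subst_add)
    qed
    ultimately show "u + v \<in> K" unfolding K_def by blast
  next
    fix u v :: "'a mpoly3" assume u: "u \<in> S_ring m n k" and v: "v \<in> K"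
    have uP: "subst (vf w) u \<in> PS m n k" by (rule subst_PS[OF u wS])
    have "coeff (subst (vf w) (u * v)) a \<in> P" for a
      unfolding subst_mult coeff_mult
    proof (rule ideal_sum[OF P])
      fix i assume "i \<in> {..a}"
      have "coeff (subst (vf w) u) i \<in> S_ring m n k" using uP unfolding PS_def by blast
      moreover have "coeff (subst (vf w) v) (a - i) \<in> P" using v unfolding K_def by blast
      ultimately show "coeff (subst (vf w) u) i * coeff (subst (vf w) v) (a - i) \<in> P" by (rule Pmul)
    qed
    moreover have "v \<in> S_ring m n k" using v unfolding K_def by blast
    hence "u * v \<in> S_ring m n k" using u S_mult[of u m n k v] by blast
    ultimately show "u * v \<in> K" unfolding K_def by blast
  qed
  moreover have GK: "minor_coeffs m n r k \<subseteq> K"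
  proof
    fix h :: "'a mpoly3" assume h: "h \<in> minor_coeffs m n r k"
    have "coeff (subst (vf w) h) a \<in> P" for a
    proof -
      have "coeff (subst (vf w) h) a \<in> minor_coeffs m n r k \<union> {0}" by (rule cl[OF h])
      thus ?thesis
      proof
        assume "coeff (subst (vf w) h) a \<in> minor_coeffs m n r k"
        thus ?thesis using GP by (rule subsetD[rotated])
      next
        assume "coeff (subst (vf w) h) a \<in> {0}"
        thus ?thesis using P0 by simp
      qed
    qed
    moreover have "h \<in> S_ring m n k" using minor_coeffs_S h by blast
    ultimately show "h \<in> K" unfolding K_def by blast
  qed
  have "Iideal m n r k \<subseteq> K" unfolding Iideal_def ideal_gen_in_def
    by (rule Inter_lower) (simp add: KI GK)
  thus ?thesis using g unfolding K_def by blast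
qed

lemma binom_split:
  assumes "A \<in> PS m n k" "B \<in> PS m n k"
  shows "\<exists>D\<in>PS m n k. (A + B) ^ N = B ^ N + A * D"
proof (induction N)
  case 0 show ?case using PS_zero by (intro bexI[of _ 0]) auto
next
  case (Suc N)
  then obtain D where D: "D \<in> PS m n k" "(A + B) ^ N = B ^ N + A * D" by blast
  have "(A + B) ^ Suc N = B ^ Suc N + A * (B ^ N + D * (A + B))"
    by (simp add: D(2) algebra_simps)
  moreover have "B ^ N + D * (A + B) \<in> PS m n k"
    using assms D(1) by (intro PS_add PS_mult PS_power) auto
  ultimately show ?case by blast
qed

lemma step:
  fixes w :: "nat \<times> nat \<times> nat \<Rightarrow> 'a::field mpoly3"
  assumes mp: "minimal_prime_over (S_ring m n k) (Iideal m n r k) P"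
    and wS: "\<And>x. x \<in> VV m n k \<Longrightarrow> w x \<in> S_ring m n k"
    and cl: "\<And>g a. g \<in> minor_coeffs m n r k \<Longrightarrow> coeff (subst (vf w) g) a \<in> minor_coeffs m n r k \<union> {0}"
    and xV: "x \<in> VV m n k" and XP: "XV x \<in> P"
  shows "w x \<in> P"
proof -
  interpret subr "S_ring m n k" by (rule S_subr)
  have Pp: "prime_ideal_in (S_ring m n k) P" and IP: "Iideal m n r k \<subseteq> P"
    using mp unfolding minimal_prime_over_def by auto
  have Pi: "ideal_in (S_ring m n k) P" using Pp unfolding prime_ideal_in_def by blast
  have GI: "minor_coeffs m n r k \<subseteq> (Iideal m n r k :: 'a mpoly3 set)" unfolding Iideal_def ideal_gen_in_def by blast
  have GP: "minor_coeffs m n r k \<subseteq> P" using GI IP by blast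
  have Ii: "ideal_in (S_ring m n k) (Iideal m n r k :: 'a mpoly3 set)"
    using ideal_Inter[OF Pi GP] by (simp add: Iideal_def)
  have XS: "XV x \<in> S_ring m n k" using xV S_Xvar[of "fst x" "fst (snd x)" "snd (snd x)" m n k]
    by (cases x) (simp add: Xvar_XV)
  have x'S: "w x \<in> S_ring m n k" by (rule wS[OF xV])
  obtain y N where y: "y \<in> S_ring m n k" "y \<notin> P" and yI: "y * XV x ^ N \<in> Iideal m n r k"
    using min_prime_witness[OF Ii mp XP] by blast
  have hK: "coeff (subst (vf w) (y * XV x ^ N)) N \<in> P"
    by (rule K_closed[OF wS cl Pi GP yI])
  interpret sh: comm_ring_hom "subst (vf w)" by (rule subst_hom)
  define Y where "Y = subst (vf w) y"
  have YP: "Y \<in> PS m n k" unfolding Y_def by (rule subst_PS[OF y(1) wS])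
  have "subst (vf w) (y * XV x ^ N) = Y * (vf w x) ^ N"
    unfolding Y_def by (simp add: subst_mult sh.hom_power subst_XV)
  also have "vf w x = [:XV x:] + monom (w x) 1"
    by (simp add: vf_def monom_Suc monom_0)
  finally have e1: "subst (vf w) (y * XV x ^ N) = Y * ([:XV x:] + monom (w x) 1) ^ N" .
  obtain D where D: "D \<in> PS m n k" "([:XV x:] + monom (w x) 1) ^ N = (monom (w x) 1) ^ N + [:XV x:] * D"
    using binom_split[OF PS_const[OF XS] PS_monom[OF x'S]] by blast
  have e3: "Y * ((monom (w x) 1) ^ N + [:XV x:] * D) = Y * monom (w x ^ N) N + Polynomial.smult (XV x) (Y * D)"
    by (simp add: monom_power algebra_simps)
  have e2: "coeff (subst (vf w) (y * XV x ^ N)) N = w x ^ N * y + XV x * coeff (Y * D) N"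
    unfolding e1 D(2) e3 coeff_add coeff_smult coeff_mult_monomN unfolding Y_def subst_coeff0 ..
  have s: "coeff (Y * D) N \<in> S_ring m n k" using PS_mult[OF YP D(1)] unfolding PS_def by blast
  have Xs: "XV x * coeff (Y * D) N \<in> P" by (rule ideal_multR[OF Pi XP s])
  have "w x ^ N * y \<in> P" using ideal_diff[OF Pi hK[unfolded e2] Xs] by simp
  hence "w x ^ N \<in> P" using Pp y S_power[OF x'S] unfolding prime_ideal_in_def by blast
  thus ?thesis by (rule prime_pow[OF Pp x'S])
qed


lemma row_step:
  assumes mp: "minimal_prime_over (S_ring m n k) (Iideal m n r k) (P :: 'a::field mpoly3 set)"
    and i: "i \<in> {1..m}" "i' \<in> {1..m}" and adj: "i' = Suc i \<or> i = Suc i'"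
    and j: "j \<in> {1..n}" and k: "1 \<le> k" and XP: "Xvar i j 0 \<in> P"
  shows "Xvar i' j 0 \<in> P"
proof -
  have "wR i i' (i,j,0) \<in> P"
  proof (rule step[OF mp])
    fix x :: "nat \<times> nat \<times> nat" assume x: "x \<in> VV m n k"
    obtain a b l where xe: "x = (a,b,l)" by (cases x)
    show "wR i i' x \<in> S_ring m n k"
      using x i S_Xvar[of i' b l m n k] S_zero by (auto simp: xe wR_def)
  next
    fix g a assume "g \<in> minor_coeffs m n r k"
    thus "coeff (subst (vf (wR i i')) g) a \<in> minor_coeffs m n r k \<union> {0}"
      by (rule row_closed[OF adj i(2)])
  next
    show "(i,j,0) \<in> VV m n k" using i j k by auto
    show "XV (i,j,0) \<in> P" using XP by (simp add: Xvar_XV)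
  qed
  thus ?thesis by (simp add: wR_def)
qed

lemma col_step:
  assumes mp: "minimal_prime_over (S_ring m n k) (Iideal m n r k) (P :: 'a::field mpoly3 set)"
    and j: "j \<in> {1..n}" "j' \<in> {1..n}" and adj: "j' = Suc j \<or> j = Suc j'"
    and i: "i \<in> {1..m}" and k: "1 \<le> k" and XP: "Xvar i j 0 \<in> P"
  shows "Xvar i j' 0 \<in> P"
proof -
  have "wC j j' (i,j,0) \<in> P"
  proof (rule step[OF mp])
    fix x :: "nat \<times> nat \<times> nat" assume x: "x \<in> VV m n k"
    obtain a b l where xe: "x = (a,b,l)" by (cases x)
    show "wC j j' x \<in> S_ring m n k"
      using x j S_Xvar[of a j' l m n k] S_zero by (auto simp: xe wC_def)
  next
    fix g a assume "g \<in> minor_coeffs m n r k"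
    thus "coeff (subst (vf (wC j j')) g) a \<in> minor_coeffs m n r k \<union> {0}"
      by (rule col_closed[OF adj j(2)])
  next
    show "(i,j,0) \<in> VV m n k" using i j k by auto
    show "XV (i,j,0) \<in> P" using XP by (simp add: Xvar_XV)
  qed
  thus ?thesis by (simp add: wC_def)
qed

lemma rows_all:
  assumes mp: "minimal_prime_over (S_ring m n k) (Iideal m n r k) (P :: 'a::field mpoly3 set)"
    and i: "i \<in> {1..m}" "i' \<in> {1..m}" and j: "j \<in> {1..n}" and k: "1 \<le> k" and XP: "Xvar i j 0 \<in> P"
  shows "Xvar i' j 0 \<in> P"
proof -
  have up: "i + d \<le> m \<longrightarrow> Xvar (i + d) j 0 \<in> P" for d
  proof (induction d)
    case 0 thus ?case using XP by simp
  next
    case (Suc d)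
    show ?case
    proof
      assume le: "i + Suc d \<le> m"
      hence "Xvar (i + d) j 0 \<in> P" using Suc by simp
      thus "Xvar (i + Suc d) j 0 \<in> P"
        using row_step[OF mp, of "i + d" "i + Suc d" j] i le j k by auto
    qed
  qed
  have down: "d < i \<longrightarrow> Xvar (i - d) j 0 \<in> P" for d
  proof (induction d)
    case 0 thus ?case using XP by simp
  next
    case (Suc d)
    show ?case
    proof
      assume lt: "Suc d < i"
      hence "Xvar (i - d) j 0 \<in> P" using Suc by simp
      moreover have "i - d = Suc (i - Suc d)" using lt by simp
      ultimately show "Xvar (i - Suc d) j 0 \<in> P"
        using row_step[OF mp, of "i - d" "i - Suc d" j] i lt j k by auto
    qed
  qed
  show ?thesis
  proof (cases "i \<le> i'")
    case True
    thus ?thesis using up[of "i' - i"] i by auto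
  next
    case False
    thus ?thesis using down[of "i - i'"] i by auto
  qed
qed

lemma cols_all:
  assumes mp: "minimal_prime_over (S_ring m n k) (Iideal m n r k) (P :: 'a::field mpoly3 set)"
    and j: "j \<in> {1..n}" "j' \<in> {1..n}" and i: "i \<in> {1..m}" and k: "1 \<le> k" and XP: "Xvar i j 0 \<in> P"
  shows "Xvar i j' 0 \<in> P"
proof -
  have up: "j + d \<le> n \<longrightarrow> Xvar i (j + d) 0 \<in> P" for d
  proof (induction d)
    case 0 thus ?case using XP by simp
  next
    case (Suc d)
    show ?case
    proof
      assume le: "j + Suc d \<le> n"
      hence "Xvar i (j + d) 0 \<in> P" using Suc by simp
      thus "Xvar i (j + Suc d) 0 \<in> P"
        using col_step[OF mp, of "j + d" "j + Suc d" i] j le i k by auto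
    qed
  qed
  have down: "d < j \<longrightarrow> Xvar i (j - d) 0 \<in> P" for d
  proof (induction d)
    case 0 thus ?case using XP by simp
  next
    case (Suc d)
    show ?case
    proof
      assume lt: "Suc d < j"
      hence "Xvar i (j - d) 0 \<in> P" using Suc by simp
      moreover have "j - d = Suc (j - Suc d)" using lt by simp
      ultimately show "Xvar i (j - Suc d) 0 \<in> P"
        using col_step[OF mp, of "j - d" "j - Suc d" i] j lt i k by auto
    qed
  qed
  show ?thesis
  proof (cases "j \<le> j'")
    case True
    thus ?thesis using up[of "j' - j"] j by auto
  next
    case False
    thus ?thesis using down[of "j - j'"] j by auto
  qed
qed

theorem proposition2p6:
  fixes P :: "'a::field mpoly3 set" and m n r k :: nat
  assumes "alg_closed TYPE('a)"
    and "1 \<le> r" and "r \<le> m" and "m \<le> n" and "1 \<le> k"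
    and "minimal_prime_over (S_ring m n k) (Iideal m n r k) P"
    and "i \<in> {1..m}" and "i' \<in> {1..m}" and "j \<in> {1..n}" and "j' \<in> {1..n}"
  shows "Xvar i j 0 \<in> P \<longleftrightarrow> Xvar i' j' 0 \<in> P"
proof
  assume "Xvar i j 0 \<in> P"
  hence "Xvar i' j 0 \<in> P" using rows_all[OF assms(6) assms(7,8,9,5)] by blast
  thus "Xvar i' j' 0 \<in> P" using cols_all[OF assms(6) assms(9,10,8,5)] by blast
next
  assume "Xvar i' j' 0 \<in> P"
  hence "Xvar i j' 0 \<in> P" using rows_all[OF assms(6) assms(8,7,10,5)] by blast
  thus "Xvar i j 0 \<in> P" using cols_all[OF assms(6) assms(10,9,7,5)] by blast
qed

end
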